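(* Let $m>1$ be an integer and $k>1$ an odd integer. Then there exists a number $c$ such that for every integer base $b\ge c$, the number $[m\cdot(b-1)]^k$ is antipalindromic in base $b$. Moreover, one may take $c=\binom{k}{\frac{k-1}{2}}\cdot m^k$.
   Context: For an integer $b\ge 2$, every natural number $x$ has a unique base-$b$ expansion $x=a_\ell b^\ell+\dots+a_1b+a_0$ with $a_0,\dots,a_\ell\in\{0,1,\dots,b-1\}$ and $a_\ell\neq 0$. The number $x$ is antipalindromic in base $b$ if $a_j=b-1-a_{\ell-j}$ for all $j\in\{0,1,\dots,\ell\}$. *)

theory Defs
  imports Main
begin

fun digits :: "nat \<Rightarrow> nat \<Rightarrow> nat list" where
  "digits b x = (if b < 2 \<or> x = 0 then [] else (x mod b) # digits b (x div b))"

declare digits.simps [simp del]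

definition antipalindromic :: "nat \<Rightarrow> nat \<Rightarrow> bool" where
  "antipalindromic b x \<longleftrightarrow>
     (let ds = digits b x; l = length ds - 1 in
      \<forall>j \<le> l. ds ! j = b - 1 - ds ! (l - j))"

end

theory Submission
  imports Defs "HOL.Binomial_Plus"
begin

fun hval :: "nat \<Rightarrow> nat list \<Rightarrow> nat" where
  "hval b [] = 0"
| "hval b (d # ds) = d + b * hval b ds"

lemma hval_zero: "b \<ge> 2 \<Longrightarrow> hval b ds = 0 \<Longrightarrow> x \<in> set ds \<Longrightarrow> x = 0"
  by (induction ds) auto

lemma digits_hval:
  assumes "b \<ge> 2"
  shows "(\<forall>x\<in>set ds. x < b) \<Longrightarrow> (ds = [] \<or> last ds \<noteq> 0) \<Longrightarrow> digits b (hval b ds) = ds"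
proof (induction ds)
  case Nil
  then show ?case using assms by (simp add: digits.simps)
next
  case (Cons d ds)
  show ?case
  proof (cases "ds = []")
    case True
    then have "d \<noteq> 0" "d < b" using Cons.prems by auto
    then show ?thesis using True assms
      by (simp add: digits.simps[of b d] digits.simps[of b 0])
  next
    case False
    then have "last ds \<noteq> 0" using Cons.prems by auto
    then have "hval b ds \<noteq> 0" using False hval_zero[OF assms, of ds "last ds"] by auto
    then have nz: "d + b * hval b ds \<noteq> 0" using assms by simp
    have db: "d < b" using Cons.prems by auto
    have IH: "digits b (hval b ds) = ds" using Cons False by auto
    have "(d + b * hval b ds) mod b = d" using db by simp
    moreover have "(d + b * hval b ds) div b = hval b ds" using db assms by simp
    ultimately show ?thesis using nz assms IH
      by (simp add: digits.simps[of b "d + b * hval b ds"])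
  qed
qed

lemma hval_sum: "int (hval b ds) = (\<Sum>i<length ds. int (ds ! i) * int b ^ i)"
proof (induction ds)
  case Nil then show ?case by simp
next
  case (Cons d ds)
  have "(\<Sum>i<length (d # ds). int ((d # ds) ! i) * int b ^ i)
        = int d + (\<Sum>i<length ds. int (ds ! i) * int b ^ Suc i)"
    by (simp only: length_Cons sum.lessThan_Suc_shift) simp
  also have "\<dots> = int d + int b * (\<Sum>i<length ds. int (ds ! i) * int b ^ i)"
    by (simp add: sum_distrib_left algebra_simps)
  finally show ?case using Cons by simp
qed

lemma telescope: "(\<Sum>i<2*n. (if even i then (B::int) ^ (i+1) else - (B ^ i))) = 0"
  by (induction n) auto

lemma main_part:
  fixes m k b :: nat
  assumes m: "m > 1" and k: "k > 1" and ok: "odd k" and b2: "b \<ge> 2"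
    and bb: "b \<ge> (k choose ((k - 1) div 2)) * m ^ k"
  shows "antipalindromic b ((m * (b - 1)) ^ k)"
proof -
  define M where "M = m ^ k"
  have M1: "M > 1" using m k unfolding M_def by (metis one_less_power less_trans zero_less_one)
  have kd: "(k - 1) div 2 = k div 2" using ok by presburger
  have cb: "M * (k choose i) \<le> b" for i
  proof -
    have "k choose i \<le> k choose (k div 2)" by (rule binomial_maximum)
    then have "M * (k choose i) \<le> M * (k choose (k div 2))" by simp
    moreover have "M * (k choose (k div 2)) \<le> b" using bb kd unfolding M_def by (simp add: mult.commute)
    ultimately show ?thesis by linarith
  qed
  define dd where "dd i = (if even i then b - M * (k choose i) else M * (k choose i) - 1)" for i
  define ds where "ds = map dd [0..<k+1]"
  have len: "length ds = k + 1" unfolding ds_def by simp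
  have nth: "i \<le> k \<Longrightarrow> ds ! i = dd i" for i
    unfolding ds_def by (simp del: upt_Suc add: nth_map_upt less_Suc_eq_le)
  have ddlt: "dd i < b" if "i \<le> k" for i
  proof -
    have "k choose i \<ge> 1" using that zero_less_binomial[of i k] by linarith
    then have "M * (k choose i) \<ge> 1" using M1 by simp
    moreover have "M * (k choose i) \<le> b" by (rule cb)
    ultimately have "b - M * (k choose i) < b" "M * (k choose i) - 1 < b" by linarith+
    then show ?thesis unfolding dd_def by auto
  qed
  have setlt: "\<forall>x\<in>set ds. x < b" unfolding ds_def using ddlt by auto
  have lastd: "last ds = M - 1"
  proof -
    have "ds \<noteq> []" using len by auto
    then have "last ds = ds ! k" using len by (simp add: last_conv_nth)
    also have "\<dots> = dd k" using nth by simp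
    finally show ?thesis unfolding dd_def using ok by simp
  qed
  then have lastnz: "last ds \<noteq> 0" using M1 by simp
  have val: "hval b ds = (m * (b - 1)) ^ k"
  proof -
    define B where "B = int b"
    have e: "int (dd i) * B ^ i = int M * (int (k choose i) * B ^ i * (-1) ^ (k - i))
              + (if even i then B ^ (i+1) else - (B ^ i))"
      if "i \<le> k" for i
    proof (cases "even i")
      case True
      then have "odd (k - i)" using ok that by simp
      then have s: "(-1::int) ^ (k - i) = -1" by simp
      have h: "int (dd i) = B - int M * int (k choose i)"
        using True cb[of i] unfolding dd_def B_def by (simp add: of_nat_diff)
      show ?thesis unfolding h using True s by (simp add: algebra_simps)
    next
      case False
      then have "even (k - i)" using ok that by simp
      then have s: "(-1::int) ^ (k - i) = 1" by simp
      have "k choose i \<ge> 1" using that zero_less_binomial[of i k] by linarith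
      then have "M * (k choose i) \<ge> 1" using M1 by simp
      then have h: "int (dd i) = int M * int (k choose i) - 1"
        using False unfolding dd_def by (simp add: of_nat_diff)
      show ?thesis unfolding h using False s by (simp add: algebra_simps)
    qed
    have "int (hval b ds) = (\<Sum>i<k+1. int (dd i) * B ^ i)"
      unfolding hval_sum len B_def using nth by (intro sum.cong) auto
    also have "\<dots> = (\<Sum>i<k+1. int M * (int (k choose i) * B ^ i * (-1) ^ (k - i))
                   + (if even i then B ^ (i+1) else - (B ^ i)))"
      by (rule sum.cong) (auto simp only: e lessThan_iff less_Suc_eq_le Suc_eq_plus1[symmetric])
    also have "\<dots> = (\<Sum>i<k+1. int M * (int (k choose i) * B ^ i * (-1) ^ (k - i)))
                   + (\<Sum>i<k+1. (if even i then B ^ (i+1) else - (B ^ i)))"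
      by (rule sum.distrib)
    also have "(\<Sum>i<k+1. (if even i then B ^ (i+1) else - (B ^ i))) = 0"
    proof -
      have "k + 1 = 2 * ((k + 1) div 2)" using ok by presburger
      then show ?thesis using telescope[where n="(k + 1) div 2" and B=B] by simp
    qed
    also have "(\<Sum>i<k+1. int M * (int (k choose i) * B ^ i * (-1) ^ (k - i)))
               = int M * (\<Sum>i\<le>k. of_nat (k choose i) * B ^ i * (-1) ^ (k - i))"
      by (simp only: sum_distrib_left Suc_eq_plus1[symmetric] lessThan_Suc_atMost)
    also have "(\<Sum>i\<le>k. of_nat (k choose i) * B ^ i * (-1) ^ (k - i)) = (B + (-1)) ^ k"
      by (rule binomial_ring[symmetric])
    also have "int M * (B + (-1)) ^ k = int ((m * (b - 1)) ^ k)"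
    proof -
      have "B + (-1) = int (b - 1)" using b2 unfolding B_def by (simp add: of_nat_diff)
      then show ?thesis unfolding M_def by (simp add: power_mult_distrib)
    qed
    finally have "int (hval b ds) = int ((m * (b - 1)) ^ k)" by simp
    then show ?thesis by (simp only: of_nat_eq_iff)
  qed
  have dig: "digits b ((m * (b - 1)) ^ k) = ds"
    using digits_hval[OF b2 setlt] lastnz val by simp
  show ?thesis
    unfolding antipalindromic_def Let_def dig len
  proof (intro allI impI)
    fix j assume j: "j \<le> k + 1 - 1"
    then have j': "j \<le> k" by simp
    have ck: "k choose (k - j) = k choose j" using binomial_symmetric[OF j'] by simp
    have "k choose j \<ge> 1" using j' zero_less_binomial[of j k] by linarith
    then have c1: "M * (k choose j) \<ge> 1" using M1 by simp
    have n1: "ds ! j = dd j" using nth j' by simp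
    have n2: "ds ! (k + 1 - 1 - j) = dd (k - j)" using nth j' by simp
    have cbj: "M * (k choose j) \<le> b" by (rule cb)
    show "ds ! j = b - 1 - ds ! (k + 1 - 1 - j)"
      unfolding n1 n2
    proof (cases "even j")
      case True
      then have "odd (k - j)" using ok j' by simp
      then have "dd (k - j) = M * (k choose j) - 1" "dd j = b - M * (k choose j)"
        unfolding dd_def ck using True by auto
      then show "dd j = b - 1 - dd (k - j)" using c1 cbj by linarith
    next
      case False
      then have "even (k - j)" using ok j' by simp
      then have "dd (k - j) = b - M * (k choose j)" "dd j = M * (k choose j) - 1"
        unfolding dd_def ck using False by auto
      then show "dd j = b - 1 - dd (k - j)" using c1 cbj by linarith
    qed
  qed
qed

theorem mainTheorem12:
  fixes m k :: nat
  assumes "m > 1" and "k > 1" and "odd k"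
  shows "(\<exists>c::nat. \<forall>b::nat. b \<ge> 2 \<longrightarrow> b \<ge> c \<longrightarrow> antipalindromic b ((m * (b - 1)) ^ k))
       \<and> (\<forall>b::nat. b \<ge> 2 \<longrightarrow> b \<ge> (k choose ((k - 1) div 2)) * m ^ k
            \<longrightarrow> antipalindromic b ((m * (b - 1)) ^ k))"
  using main_part[OF assms] by blast

end
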